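(* Let an instance of the UDODOSP with exact requests $r^d:=r_l^d=r_u^d$ be given and set $R^d=\sum_{i=1}^d r^i$ for $0\le d\le D$ (so $R^0=0$). If the instance is feasible, then $R^D\le N U_w$; $\;N D-R^D\le N U_o$; $\;R^{d+u_w}-R^{d-1}\le N u_w$ for all $1\le d\le D-u_w$; and $\;R^{d+u_o}-R^{d-1}\ge N$ for all $1\le d\le D-u_o$.
   Context: An instance of the Days On Days Off Scheduling Problem (DODOSP) consists of integers $D\ge 1$ (days), $N\ge 1$ (workers), bounds $l_w,u_w,l_o,u_o,U_w,U_o\in\mathbb{N}$, and for each day $d\in\{1,\dots,D\}$ integers $0\le r_l^d\le r_u^d\le N$. A schedule is a map $f:\{n_1,\dots,n_N\}\times\{1,\dots,D\}\to\{\mathrm{ON},\mathrm{OFF}\}$ (not cyclic). A work period (resp. off period) of a worker is an inclusion-wise maximal set of consecutive days on which the worker is ON (resp. OFF). A schedule is feasible if on every day $d$ the number of workers that are ON lies in $[r_l^d,r_u^d]$, every work period has length between $l_w$ and $u_w$, every off period has length between $l_o$ and $u_o$, every worker is ON on at most $U_w$ days and OFF on at most $U_o$ days. An instance is feasible if a feasible schedule exists. The UDODOSP is the DODOSP restricted to instances with $l_w=l_o=1$. *)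

theory Defs
  imports Main
begin

text \<open>Schedules: workers are indexed by 0..N-1, days by 1..D.
  sched n d = True means worker n is ON on day d, False means OFF.\<close>

definition is_period :: "nat \<Rightarrow> (nat \<Rightarrow> nat \<Rightarrow> bool) \<Rightarrow> nat \<Rightarrow> bool \<Rightarrow> nat \<Rightarrow> nat \<Rightarrow> bool" where
  "is_period D sched n v a b \<longleftrightarrow>
     1 \<le> a \<and> a \<le> b \<and> b \<le> D \<and>
     (\<forall>d\<in>{a..b}. sched n d = v) \<and>
     (a = 1 \<or> sched n (a - 1) \<noteq> v) \<and>
     (b = D \<or> sched n (b + 1) \<noteq> v)"

definition feasible_schedule ::
  "nat \<Rightarrow> nat \<Rightarrow> nat \<Rightarrow> nat \<Rightarrow> nat \<Rightarrow> nat \<Rightarrow> nat \<Rightarrow> nat \<Rightarrow>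
   (nat \<Rightarrow> nat) \<Rightarrow> (nat \<Rightarrow> nat) \<Rightarrow> (nat \<Rightarrow> nat \<Rightarrow> bool) \<Rightarrow> bool" where
  "feasible_schedule D N lw uw lo uo Uw Uo rl ru sched \<longleftrightarrow>
     (\<forall>d\<in>{1..D}. rl d \<le> card {n. n < N \<and> sched n d} \<and> card {n. n < N \<and> sched n d} \<le> ru d) \<and>
     (\<forall>n<N. \<forall>a b. is_period D sched n True a b \<longrightarrow> lw \<le> b - a + 1 \<and> b - a + 1 \<le> uw) \<and>
     (\<forall>n<N. \<forall>a b. is_period D sched n False a b \<longrightarrow> lo \<le> b - a + 1 \<and> b - a + 1 \<le> uo) \<and>
     (\<forall>n<N. card {d\<in>{1..D}. sched n d} \<le> Uw) \<and>
     (\<forall>n<N. card {d\<in>{1..D}. \<not> sched n d} \<le> Uo)"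

definition feasible_instance ::
  "nat \<Rightarrow> nat \<Rightarrow> nat \<Rightarrow> nat \<Rightarrow> nat \<Rightarrow> nat \<Rightarrow> nat \<Rightarrow> nat \<Rightarrow>
   (nat \<Rightarrow> nat) \<Rightarrow> (nat \<Rightarrow> nat) \<Rightarrow> bool" where
  "feasible_instance D N lw uw lo uo Uw Uo rl ru \<longleftrightarrow>
     (\<exists>sched. feasible_schedule D N lw uw lo uo Uw Uo rl ru sched)"

end

theory Submission
  imports Defs
begin

lemma ext_period:
  assumes "1 \<le> x" "x \<le> y" "y \<le> D" "\<forall>i\<in>{x..y}. sched n i = v"
  shows "\<exists>a b. is_period D sched n v a b \<and> a \<le> x \<and> y \<le> b"
  using assms
proof (induction "(x - 1) + (D - y)" arbitrary: x y rule: less_induct)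
  case less
  show ?case
  proof (cases "x > 1 \<and> sched n (x - 1) = v")
    case True
    have "\<forall>i\<in>{x-1..y}. sched n i = v" proof
      fix i assume "i \<in> {x-1..y}"
      then have "i = x - 1 \<or> i \<in> {x..y}" by auto
      then show "sched n i = v" using True less.prems(4) by blast
    qed
    moreover have "(x - 1 - 1) + (D - y) < (x - 1) + (D - y)" using True by linarith
    moreover have "1 \<le> x - 1" "x - 1 \<le> y" "y \<le> D" using True less.prems by auto
    ultimately obtain a b where "is_period D sched n v a b \<and> a \<le> x - 1 \<and> y \<le> b"
      using less.hyps[of "x-1" y] by blast
    then show ?thesis by force
  next
    case F1: False
    show ?thesis
    proof (cases "y < D \<and> sched n (y + 1) = v")
      case True
      have "\<forall>i\<in>{x..y+1}. sched n i = v" proof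
        fix i assume "i \<in> {x..y+1}"
        then have "i = y + 1 \<or> i \<in> {x..y}" by auto
        then show "sched n i = v" using True less.prems(4) by blast
      qed
      moreover have "(x - 1) + (D - (y + 1)) < (x - 1) + (D - y)" using True by linarith
      moreover have "1 \<le> x" "x \<le> y + 1" "y + 1 \<le> D" using True less.prems by auto
      ultimately obtain a b where "is_period D sched n v a b \<and> a \<le> x \<and> y + 1 \<le> b"
        using less.hyps[of x "y+1"] by blast
      then show ?thesis by force
    next
      case False
      have "is_period D sched n v x y" unfolding is_period_def
        using F1 False less.prems by auto
      then show ?thesis by blast
    qed
  qed
qed

lemma card_filter_sum: "finite A \<Longrightarrow> card {x\<in>A. P x} = (\<Sum>x\<in>A. if P x then 1 else 0::nat)"
  by (simp add: sum.If_cases Int_def)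

lemma double_count:
  fixes N :: nat assumes "finite A"
  shows "(\<Sum>d\<in>A. card {n. n < N \<and> P n d}) = (\<Sum>n<N. card {d\<in>A. P n d})"
proof -
  have "(\<Sum>d\<in>A. card {n. n < N \<and> P n d}) = (\<Sum>d\<in>A. \<Sum>n<N. if P n d then 1 else 0::nat)"
  proof (rule sum.cong)
    fix d assume "d \<in> A"
    have eq: "{n. n < N \<and> P n d} = {n\<in>{..<N}. P n d}" by auto
    show "card {n. n < N \<and> P n d} = (\<Sum>n<N. if P n d then 1 else 0::nat)"
      unfolding eq by (rule card_filter_sum[of "{..<N}" "\<lambda>n. P n d", OF finite_lessThan])
  qed simp
  also have "\<dots> = (\<Sum>n<N. \<Sum>d\<in>A. if P n d then 1 else 0::nat)" by (rule sum.swap)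
  also have "\<dots> = (\<Sum>n<N. card {d\<in>A. P n d})"
    using card_filter_sum[OF assms] by simp
  finally show ?thesis .
qed

lemma aux1: "(a::nat) = b + s \<Longrightarrow> s \<le> t \<Longrightarrow> int a - int b \<le> int t" by simp
lemma aux2: "(a::nat) = b + s \<Longrightarrow> t \<le> s \<Longrightarrow> int a - int b \<ge> int t" by simp

theorem lemma4p2:
  fixes D N lw uw lo uo Uw Uo :: nat and r :: "nat \<Rightarrow> nat" and R :: "nat \<Rightarrow> nat"
  assumes "D \<ge> 1" and "N \<ge> 1"
    and "\<forall>d\<in>{1..D}. r d \<le> N"
    and "lw = 1" and "lo = 1"
    and R_def: "\<And>d. R d = (\<Sum>i=1..d. r i)"
    and "feasible_instance D N lw uw lo uo Uw Uo r r"
  shows "R D \<le> N * Uw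
    \<and> int (N * D) - int (R D) \<le> int (N * Uo)
    \<and> (\<forall>d. 1 \<le> d \<and> d + uw \<le> D \<longrightarrow> int (R (d + uw)) - int (R (d - 1)) \<le> int (N * uw))
    \<and> (\<forall>d. 1 \<le> d \<and> d + uo \<le> D \<longrightarrow> int (R (d + uo)) - int (R (d - 1)) \<ge> int N)"
proof -
  obtain sched where fs: "feasible_schedule D N lw uw lo uo Uw Uo r r sched"
    using assms(7) unfolding feasible_instance_def by blast
  have rd: "\<And>d. d \<in> {1..D} \<Longrightarrow> r d = card {n. n < N \<and> sched n d}"
    using fs unfolding feasible_schedule_def by (meson le_antisym)
  have perW: "\<And>n a b. n < N \<Longrightarrow> is_period D sched n True a b \<Longrightarrow> b - a + 1 \<le> uw"
    using fs unfolding feasible_schedule_def by blast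
  have perO: "\<And>n a b. n < N \<Longrightarrow> is_period D sched n False a b \<Longrightarrow> b - a + 1 \<le> uo"
    using fs unfolding feasible_schedule_def by blast
  have Uw: "\<And>n. n < N \<Longrightarrow> card {d\<in>{1..D}. sched n d} \<le> Uw"
    using fs unfolding feasible_schedule_def by blast
  have Uo: "\<And>n. n < N \<Longrightarrow> card {d\<in>{1..D}. \<not> sched n d} \<le> Uo"
    using fs unfolding feasible_schedule_def by blast
  have win: "\<And>A. A \<subseteq> {1..D} \<Longrightarrow> (\<Sum>i\<in>A. r i) = (\<Sum>n<N. card {i\<in>A. sched n i})"
  proof -
    fix A :: "nat set" assume A: "A \<subseteq> {1..D}"
    have fin: "finite A" using A finite_subset by blast
    have "(\<Sum>i\<in>A. r i) = (\<Sum>i\<in>A. card {n. n < N \<and> sched n i})"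
      using A rd by (intro sum.cong) auto
    also have "\<dots> = (\<Sum>n<N. card {i\<in>A. sched n i})" by (rule double_count[OF fin])
    finally show "(\<Sum>i\<in>A. r i) = (\<Sum>n<N. card {i\<in>A. sched n i})" .
  qed
  have RD: "R D = (\<Sum>n<N. card {i\<in>{1..D}. sched n i})" using win[of "{1..D}"] R_def by simp
  have c1: "R D \<le> N * Uw"
  proof -
    have "R D \<le> (\<Sum>n<N. Uw)" unfolding RD by (rule sum_mono) (use Uw in auto)
    then show ?thesis by simp
  qed
  have c2: "int (N * D) - int (R D) \<le> int (N * Uo)"
  proof -
    have split: "\<And>n. card {i\<in>{1..D}. sched n i} + card {i\<in>{1..D}. \<not> sched n i} = D"
    proof -
      fix n
      have "card {i\<in>{1..D}. sched n i} + card {i\<in>{1..D}. \<not> sched n i} = card {1..D}"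
      proof (subst card_Un_disjoint[symmetric])
        have "{i\<in>{1..D}. sched n i} \<union> {i\<in>{1..D}. \<not> sched n i} = {1..D}" by auto
        then show "card ({i\<in>{1..D}. sched n i} \<union> {i\<in>{1..D}. \<not> sched n i}) = card {1..D}" by simp
      qed auto
      then show "card {i\<in>{1..D}. sched n i} + card {i\<in>{1..D}. \<not> sched n i} = D" by simp
    qed
    have "R D + (\<Sum>n<N. card {i\<in>{1..D}. \<not> sched n i}) = (\<Sum>n<N. D)"
      unfolding RD sum.distrib[symmetric] using split by simp
    moreover have "(\<Sum>n<N. card {i\<in>{1..D}. \<not> sched n i}) \<le> (\<Sum>n<N. Uo)"
      by (rule sum_mono) (use Uo in auto)
    ultimately have "int (R D) + int (\<Sum>n<N. card {i\<in>{1..D}. \<not> sched n i}) = int (N * D)"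
      "int (\<Sum>n<N. card {i\<in>{1..D}. \<not> sched n i}) \<le> int (N * Uo)"
      by (simp_all only: of_nat_add[symmetric] of_nat_le_iff) simp_all
    then show ?thesis by linarith
  qed
  have Rw: "\<And>d k. 1 \<le> d \<Longrightarrow> d + k \<le> D \<Longrightarrow> R (d + k) = R (d - 1) + (\<Sum>n<N. card {i\<in>{d..d+k}. sched n i})"
  proof -
    fix d k :: nat assume h: "1 \<le> d" "d + k \<le> D"
    have "{1..d+k} = {1..d-1} \<union> {d..d+k}" using h by auto
    then have "R (d + k) = R (d - 1) + (\<Sum>i\<in>{d..d+k}. r i)"
      unfolding R_def by (simp add: sum.union_disjoint)
    also have "(\<Sum>i\<in>{d..d+k}. r i) = (\<Sum>n<N. card {i\<in>{d..d+k}. sched n i})"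
      using h by (intro win) auto
    finally show "R (d + k) = R (d - 1) + (\<Sum>n<N. card {i\<in>{d..d+k}. sched n i})" .
  qed
  have c3: "\<forall>d. 1 \<le> d \<and> d + uw \<le> D \<longrightarrow> int (R (d + uw)) - int (R (d - 1)) \<le> int (N * uw)"
  proof (intro allI impI)
    fix d assume h: "1 \<le> d \<and> d + uw \<le> D"
    have each: "card {i\<in>{d..d+uw}. sched n i} \<le> uw" if n: "n < N" for n
    proof (cases "\<forall>i\<in>{d..d+uw}. sched n i")
      case True
      then obtain a b where "is_period D sched n True a b" "a \<le> d" "d + uw \<le> b"
        using ext_period[of d "d+uw" D sched n True] h by auto
      then have "b - a + 1 \<le> uw" "a \<le> d" "d + uw \<le> b" using perW[OF n] by auto
      then have False by linarith
      then show ?thesis ..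
    next
      case False
      then have "{i\<in>{d..d+uw}. sched n i} \<subset> {d..d+uw}" by auto
      then have "card {i\<in>{d..d+uw}. sched n i} < card {d..d+uw}" by (intro psubset_card_mono) auto
      then show ?thesis by simp
    qed
    have "(\<Sum>n<N. card {i\<in>{d..d+uw}. sched n i}) \<le> (\<Sum>n<N. uw)"
      by (rule sum_mono) (use each in auto)
    then have b: "(\<Sum>n<N. card {i\<in>{d..d+uw}. sched n i}) \<le> N * uw" by simp
    have e: "R (d + uw) = R (d - 1) + (\<Sum>n<N. card {i\<in>{d..d+uw}. sched n i})" using Rw[of d uw] h by blast
    show "int (R (d + uw)) - int (R (d - 1)) \<le> int (N * uw)" by (rule aux1[OF e b])
  qed
  have c4: "\<forall>d. 1 \<le> d \<and> d + uo \<le> D \<longrightarrow> int (R (d + uo)) - int (R (d - 1)) \<ge> int N"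
  proof (intro allI impI)
    fix d assume h: "1 \<le> d \<and> d + uo \<le> D"
    have each: "1 \<le> card {i\<in>{d..d+uo}. sched n i}" if n: "n < N" for n
    proof (cases "\<forall>i\<in>{d..d+uo}. sched n i = False")
      case True
      then obtain a b where "is_period D sched n False a b" "a \<le> d" "d + uo \<le> b"
        using ext_period[of d "d+uo" D sched n False] h by auto
      then have "b - a + 1 \<le> uo" "a \<le> d" "d + uo \<le> b" using perO[OF n] by auto
      then have False by linarith
      then show ?thesis ..
    next
      case False
      then obtain i where "i \<in> {i\<in>{d..d+uo}. sched n i}" by auto
      then have "{i\<in>{d..d+uo}. sched n i} \<noteq> {}" by blast
      then show ?thesis by (simp add: Suc_le_eq card_gt_0_iff)
    qed
    have "(\<Sum>n<N. 1) \<le> (\<Sum>n<N. card {i\<in>{d..d+uo}. sched n i})"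
      by (rule sum_mono) (use each in auto)
    then have b: "N \<le> (\<Sum>n<N. card {i\<in>{d..d+uo}. sched n i})" by simp
    have e: "R (d + uo) = R (d - 1) + (\<Sum>n<N. card {i\<in>{d..d+uo}. sched n i})" using Rw[of d uo] h by blast
    show "int (R (d + uo)) - int (R (d - 1)) \<ge> int N" by (rule aux2[OF e b])
  qed
  show ?thesis using c1 c2 c3 c4 by blast
qed

end
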